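(* There exist constants $A,B>0$ such that for all $k\in\mathbb{N}$ and all $a\geq1$, $\mathbf{T}^{(\infty,a-)}_{k+1}\leq A\rho_\infty^k\exp(-Bk/a)$.
   Context: $\mathbf{T}^{(\infty,a-)}_{n}$ denotes the number of rooted unordered trees with $n$ vertices (no constraint on degrees) all of whose subtrees rooted at the children of the root have at most $a$ vertices. By Otter's theorem, the number of rooted unordered trees with $n$ vertices is asymptotic to $\kappa_\infty\rho_\infty^nn^{-3/2}$ for constants $\kappa_\infty>0$, $\rho_\infty>1$. *)

theory Defs
  imports "HOL-Analysis.Analysis" "HOL-Library.Multiset" "HOL-Library.Landau_Symbols"
begin

text \<open>Rooted unordered trees: a root together with a multiset of subtrees
  (the subtrees rooted at the children of the root).\<close>
datatype rtree = Node (children: "rtree multiset")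

primrec nverts :: "rtree \<Rightarrow> nat" where
  "nverts (Node ts) = 1 + sum_mset (image_mset nverts ts)"

definition T_inf :: "nat \<Rightarrow> nat" where
  "T_inf n = card {t. nverts t = n}"

definition T_inf_le :: "nat \<Rightarrow> nat \<Rightarrow> nat" where
  "T_inf_le a n = card {t. nverts t = n \<and> (\<forall>c\<in>#children t. nverts c \<le> a)}"

end

theory Submission
  imports Defs
begin

lemma nverts_pos: "nverts t \<ge> 1"
  by (cases t) auto

lemma size_le_weight: "size M \<le> sum_mset (image_mset nverts M)"
proof (induction M)
  case empty then show ?case by simp
next
  case (add x M) then show ?case using nverts_pos[of x] by simp
qed

lemma child_le: "c \<in># M \<Longrightarrow> nverts c \<le> sum_mset (image_mset nverts M)"
  by (metis image_mset_add_mset le_add1 multi_member_split sum_mset.insert)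

definition PK :: "nat \<Rightarrow> 'a set \<Rightarrow> 'a multiset set" where
  "PK K U = {M. set_mset M \<subseteq> U \<and> size M \<le> K}"

lemma finite_PK: "finite U \<Longrightarrow> finite (PK K U)"
proof -
  assume "finite U"
  have "PK K U = (\<Union>n\<le>K. multisets_of_size U n)"
    unfolding PK_def multisets_of_size_def by auto
  then show ?thesis using \<open>finite U\<close> by auto
qed

lemma finite_trees: "finite {t. nverts t \<le> n}"
proof (induction n)
  case 0
  have "\<not> nverts t \<le> 0" for t using nverts_pos[of t] by simp
  then have "{t. nverts t \<le> 0} = {}" by blast
  then show ?case by (simp only: finite.emptyI)
next
  case (Suc n)
  have "{t. nverts t \<le> Suc n} \<subseteq> Node ` PK n {t. nverts t \<le> n}"
  proof
    fix t assume "t \<in> {t. nverts t \<le> Suc n}"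
    then obtain M where t: "t = Node M" and w: "sum_mset (image_mset nverts M) \<le> n"
      by (cases t) auto
    have "M \<in> PK n {t. nverts t \<le> n}"
      unfolding PK_def using w child_le[of _ M] size_le_weight[of M] by force
    then show "t \<in> Node ` PK n {t. nverts t \<le> n}" using t by blast
  qed
  then show ?case using finite_PK[OF Suc.IH] finite_subset by blast
qed

lemma finite_trees_eq: "finite {t. nverts t = n}"
  by (rule finite_subset[OF _ finite_trees[of n]]) auto

lemma prod_mset_pow: "prod_mset (image_mset (\<lambda>t. (x::real) ^ nverts t) M) = x ^ sum_mset (image_mset nverts M)"
  by (induction M) (auto simp: power_add)

lemma prod_mset_nonneg':
  fixes f :: "'a \<Rightarrow> real"
  shows "(\<forall>x\<in>#M. 0 \<le> f x) \<Longrightarrow> 0 \<le> prod_mset (image_mset f M)"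
  by (induction M) auto

lemma mset_bound:
  fixes y :: "'a \<Rightarrow> real"
  assumes "finite U" "\<forall>u\<in>U. 0 \<le> y u \<and> y u < 1"
  shows "(\<Sum>M\<in>PK K U. prod_mset (image_mset y M)) \<le> (\<Prod>u\<in>U. 1 / (1 - y u))"
  using assms
proof (induction U rule: finite_induct)
  case empty
  have "PK K {} = {{#}}" unfolding PK_def by auto
  show ?case unfolding \<open>PK K {} = {{#}}\<close> by simp
next
  case (insert u U)
  let ?g = "\<lambda>M. (count M u, filter_mset (\<lambda>v. v \<noteq> u) M)"
  let ?h = "\<lambda>(i::nat, M'). y u ^ i * prod_mset (image_mset y M')"
  have split: "M = replicate_mset (count M u) u + filter_mset (\<lambda>v. v \<noteq> u) M" for M
    by (metis filter_eq_replicate_mset multiset_partition)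
  have inj: "inj_on ?g (PK K (insert u U))"
  proof (rule inj_onI)
    fix M1 M2 assume "?g M1 = ?g M2"
    then have e: "count M1 u = count M2 u" "filter_mset (\<lambda>v. v \<noteq> u) M1 = filter_mset (\<lambda>v. v \<noteq> u) M2"
      by auto
    show "M1 = M2"
      apply (subst split[of M1], subst split[of M2])
      using e by (simp only:)
  qed
  have img: "?g ` PK K (insert u U) \<subseteq> {..K} \<times> PK K U"
  proof
    fix p assume "p \<in> ?g ` PK K (insert u U)"
    then obtain M where M: "M \<in> PK K (insert u U)" "p = ?g M" by blast
    have "count M u \<le> size M" by (simp add: count_le_size)
    moreover have "size (filter_mset (\<lambda>v. v \<noteq> u) M) \<le> K"
      using M(1) unfolding PK_def by (auto intro: le_trans[OF size_filter_mset_lesseq])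
    ultimately show "p \<in> {..K} \<times> PK K U" using M unfolding PK_def by auto
  qed
  have eq: "prod_mset (image_mset y M) = ?h (?g M)" for M
    by (subst (1) split[of M]) simp
  have nn: "0 \<le> prod_mset (image_mset y M')" if "M' \<in> PK K U" for M'
    using that insert.prems unfolding PK_def
    by (intro prod_mset_nonneg') auto
  have fin: "finite (PK K U)" using finite_PK[OF insert.hyps(1)] .
  have "(\<Sum>M\<in>PK K (insert u U). prod_mset (image_mset y M)) = (\<Sum>M\<in>PK K (insert u U). ?h (?g M))"
    by (rule sum.cong[OF refl eq])
  also have "\<dots> = (\<Sum>p\<in>?g ` PK K (insert u U). ?h p)"
    by (simp add: sum.reindex[OF inj])
  also have "\<dots> \<le> (\<Sum>p\<in>{..K} \<times> PK K U. ?h p)"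
    apply (rule sum_mono2)
    using fin img insert.prems nn by auto
  also have "\<dots> = (\<Sum>i\<le>K. y u ^ i) * (\<Sum>M'\<in>PK K U. prod_mset (image_mset y M'))"
    by (simp add: sum.cartesian_product[symmetric] sum_product)
  also have "\<dots> \<le> (1 / (1 - y u)) * (\<Prod>u\<in>U. 1 / (1 - y u))"
  proof (rule mult_mono)
    have yu: "0 \<le> y u" "y u < 1" using insert.prems by auto
    have "(\<Sum>i\<le>K. y u ^ i) = (1 - y u ^ Suc K) / (1 - y u)"
      using sum_gp_strict[of "y u" "Suc K"] yu by (simp add: lessThan_Suc_atMost)
    also have "\<dots> \<le> 1 / (1 - y u)" using yu by (simp add: divide_right_mono)
    finally show "(\<Sum>i\<le>K. y u ^ i) \<le> 1 / (1 - y u)" .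
    show "(\<Sum>M'\<in>PK K U. prod_mset (image_mset y M')) \<le> (\<Prod>u\<in>U. 1 / (1 - y u))"
      using insert by auto
    show "0 \<le> 1 / (1 - y u)" using insert.prems by auto
    show "0 \<le> (\<Sum>M'\<in>PK K U. prod_mset (image_mset y M'))" using nn by (simp add: sum_nonneg)
  qed
  also have "\<dots> = (\<Prod>u\<in>insert u U. 1 / (1 - y u))"
    using insert.hyps by simp
  finally show ?case .
qed


lemma tree_sum_eq:
  fixes x :: real
  shows "(\<Sum>u\<in>{t. nverts t \<le> a}. x ^ nverts u) = (\<Sum>j\<in>{1..a}. real (T_inf j) * x ^ j)"
proof -
  have U: "{t. nverts t \<le> a} = (\<Union>j\<in>{1..a}. {t. nverts t = j})"
    using nverts_pos by auto
  have "(\<Sum>u\<in>{t. nverts t \<le> a}. x ^ nverts u) = (\<Sum>j\<in>{1..a}. \<Sum>u\<in>{t. nverts t = j}. x ^ nverts u)"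
    unfolding U by (rule sum.UNION_disjoint) (auto simp: finite_trees_eq)
  also have "\<dots> = (\<Sum>j\<in>{1..a}. real (T_inf j) * x ^ j)"
    by (rule sum.cong) (auto simp: T_inf_def)
  finally show ?thesis .
qed

theorem lemma26:
  fixes \<kappa> \<rho> :: real
  assumes "\<kappa> > 0" and "\<rho> > 1"
    and "(\<lambda>n. real (T_inf n)) \<sim>[at_top] (\<lambda>n. \<kappa> * \<rho> ^ n * real n powr (-3/2))"
  shows "\<exists>A B :: real. A > 0 \<and> B > 0 \<and>
    (\<forall>k a :: nat. a \<ge> 1 \<longrightarrow>
       real (T_inf_le a (k + 1)) \<le> A * \<rho> ^ k * exp (- B * real k / real a))"
proof -
  define g where "g n = \<rho> ^ n * real n powr (-3/2)" for n
  have gpos: "g n > 0" if "n \<ge> 1" for n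
    using that assms(2) unfolding g_def by auto
  have ev: "eventually (\<lambda>n. norm (real (T_inf n)) \<le> 2 * norm (\<kappa> * \<rho> ^ n * real n powr (-3/2))) at_top"
    by (rule asymp_equiv_imp_eventually_le[OF assms(3)]) simp
  then obtain N where N: "\<And>n. n \<ge> N \<Longrightarrow> real (T_inf n) \<le> 2 * \<kappa> * g n"
    unfolding eventually_at_top_linorder g_def using assms(1,2)
    by (auto simp: abs_mult mult.assoc)
  define C where "C = 2 * \<kappa> + (\<Sum>n\<in>{1..N}. real (T_inf n) / g n)"
  have sumnn: "0 \<le> (\<Sum>n\<in>{1..N}. real (T_inf n) / g n)"
    using gpos by (intro sum_nonneg divide_nonneg_pos) auto
  have Cpos: "C > 0" unfolding C_def using sumnn assms(1) by linarith
  have Cb: "real (T_inf n) \<le> C * g n" if "n \<ge> 1" for n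
  proof (cases "n \<ge> N")
    case True
    then have "real (T_inf n) \<le> 2 * \<kappa> * g n" by (rule N)
    also have "\<dots> \<le> C * g n" using gpos[OF that] sumnn unfolding C_def
      by (intro mult_right_mono) auto
    finally show ?thesis .
  next
    case False
    have "real (T_inf n) / g n \<le> (\<Sum>n\<in>{1..N}. real (T_inf n) / g n)"
      by (rule member_le_sum) (use that False in \<open>auto intro!: divide_nonneg_pos gpos\<close>)
    also have "\<dots> \<le> C" unfolding C_def using assms(1) by simp
    finally show ?thesis using gpos[OF that] by (simp add: divide_le_eq)
  qed
  have Cg: "0 \<le> C * g j" if "j \<ge> 1" for j
    using Cpos gpos[OF that] by simp
  define Z where "Z = suminf (\<lambda>n. real n powr (-3/2))"
  have summ: "summable (\<lambda>n. real n powr (-3/2))"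
    by (simp add: summable_real_powr_iff)
  have Zb: "(\<Sum>j\<in>{1..a}. real j powr (-3/2)) \<le> Z" for a
    unfolding Z_def by (rule sum_le_suminf[OF summ]) auto
  have Znn: "0 \<le> Z" using Zb[of 0] by simp
  define \<delta> where "\<delta> = ln \<rho> / 2"
  have dpos: "\<delta> > 0" unfolding \<delta>_def using assms(2) by simp
  have edr: "exp \<delta> < \<rho>"
  proof -
    have "\<delta> < ln \<rho>" unfolding \<delta>_def using assms(2) by simp
    then have "exp \<delta> < exp (ln \<rho>)" by simp
    then show ?thesis using assms(2) by simp
  qed
  define q where "q = exp \<delta> / \<rho>"
  have q1: "q < 1" "0 < q" unfolding q_def using edr assms(2) by auto
  define D where "D = C * exp \<delta> * Z / (1 - q)"
  show ?thesis
  proof (intro exI conjI allI impI)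
    show "exp D > 0" by simp
    show "\<delta> > 0" by (rule dpos)
    fix k a :: nat
    assume a1: "a \<ge> 1"
    define x where "x = exp (\<delta> / real a) / \<rho>"
    have xpos: "x > 0" unfolding x_def using assms(2) by simp
    have "exp (\<delta> / real a) \<le> exp \<delta>"
      using a1 dpos by (simp add: divide_le_eq mult_le_cancel_left1)
    then have xq: "x \<le> q" unfolding x_def q_def using assms(2) by (simp add: divide_right_mono)
    have xpow: "x ^ j = exp (\<delta> * real j / real a) / \<rho> ^ j" for j
      unfolding x_def by (simp add: power_divide exp_of_nat_mult[symmetric] mult.commute)
    have xj1: "x ^ j \<le> exp \<delta> / \<rho> ^ j" if "j \<le> a" for j
    proof -
      have "\<delta> * real j / real a \<le> \<delta>" using that a1 dpos
        by (simp add: divide_le_eq mult_left_le)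
      then show ?thesis unfolding xpow using assms(2) by (simp add: divide_right_mono)
    qed
    have xj2: "x ^ j \<le> q" if "j \<ge> 1" for j
    proof -
      have "x ^ j \<le> x ^ 1"
        by (rule power_decreasing) (use that xpos xq q1 in auto)
      then show ?thesis using xq by simp
    qed
    define U where "U = {t. nverts t \<le> a}"
    define y where "y t = x ^ nverts t" for t
    have finU: "finite U" unfolding U_def by (rule finite_trees)
    have yU: "\<forall>u\<in>U. 0 \<le> y u \<and> y u < 1"
      using xj2[OF nverts_pos] q1 xpos unfolding y_def by (auto intro: order.strict_trans1)
    define X where "X = {t. nverts t = k + 1 \<and> (\<forall>c\<in>#children t. nverts c \<le> a)}"
    have XT: "T_inf_le a (k + 1) = card X" unfolding T_inf_le_def X_def ..
    have sub: "children ` X \<subseteq> PK k U"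
    proof
      fix M assume "M \<in> children ` X"
      then obtain t where t: "t \<in> X" "M = children t" by blast
      then have w: "sum_mset (image_mset nverts M) = k" unfolding X_def by (cases t) auto
      show "M \<in> PK k U" using t size_le_weight[of M] w unfolding PK_def U_def X_def by auto
    qed
    have injc: "inj_on children X"
      by (rule inj_onI) (metis rtree.collapse)
    have finX: "finite (children ` X)"
      using finite_subset[OF sub finite_PK[OF finU]] .
    have weight: "prod_mset (image_mset y M) = x ^ k" if "M \<in> children ` X" for M
    proof -
      from that obtain t where t: "t \<in> X" "M = children t" by blast
      then have w: "sum_mset (image_mset nverts M) = k" unfolding X_def by (cases t) auto
      show ?thesis unfolding y_def prod_mset_pow w ..
    qed
    have "real (card X) * x ^ k = real (card (children ` X)) * x ^ k"
      by (simp add: card_image[OF injc])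
    also have "\<dots> = (\<Sum>M\<in>children ` X. prod_mset (image_mset y M))"
      using weight by simp
    also have "\<dots> \<le> (\<Sum>M\<in>PK k U. prod_mset (image_mset y M))"
      apply (rule sum_mono2[OF finite_PK[OF finU] sub])
      using yU unfolding PK_def by (auto intro!: prod_mset_nonneg')
    also have "\<dots> \<le> (\<Prod>u\<in>U. 1 / (1 - y u))"
      by (rule mset_bound[OF finU yU])
    also have "\<dots> \<le> (\<Prod>u\<in>U. exp (y u / (1 - q)))"
    proof (rule prod_mono)
      fix u assume u: "u \<in> U"
      have y0: "0 \<le> y u" "y u < 1" "y u \<le> q" using yU u xj2[OF nverts_pos] unfolding y_def by auto
      have "1 / (1 - y u) = 1 + y u / (1 - y u)" using y0 by (simp add: field_simps)
      also have "\<dots> \<le> exp (y u / (1 - y u))" by (rule exp_ge_add_one_self)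
      also have "\<dots> \<le> exp (y u / (1 - q))"
        using y0 q1 by (simp add: frac_le)
      finally show "0 \<le> 1 / (1 - y u) \<and> 1 / (1 - y u) \<le> exp (y u / (1 - q))" using y0 by simp
    qed
    also have "\<dots> = exp ((\<Sum>u\<in>U. y u) / (1 - q))"
      by (simp add: exp_sum[OF finU] sum_divide_distrib)
    also have "\<dots> \<le> exp D"
    proof -
      have "(\<Sum>u\<in>U. y u) = (\<Sum>j\<in>{1..a}. real (T_inf j) * x ^ j)"
        unfolding U_def y_def by (rule tree_sum_eq)
      also have "\<dots> \<le> (\<Sum>j\<in>{1..a}. C * g j * (exp \<delta> / \<rho> ^ j))"
        by (rule sum_mono, rule mult_mono) (use Cb xj1 xpos Cg in auto)
      also have "\<dots> = (\<Sum>j\<in>{1..a}. C * exp \<delta> * real j powr (-3/2))"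
      proof (rule sum.cong)
        fix j
        have "\<rho> ^ j \<noteq> 0" using assms(2) by simp
        then show "C * g j * (exp \<delta> / \<rho> ^ j) = C * exp \<delta> * real j powr (-3/2)"
          unfolding g_def by simp
      qed simp
      also have "\<dots> = C * exp \<delta> * (\<Sum>j\<in>{1..a}. real j powr (-3/2))"
        by (simp add: sum_distrib_left)
      also have "\<dots> \<le> C * exp \<delta> * Z"
        using Zb Cpos by (intro mult_left_mono) auto
      finally have "(\<Sum>u\<in>U. y u) / (1 - q) \<le> D"
        unfolding D_def using q1 by (simp add: divide_right_mono)
      then show ?thesis by simp
    qed
    finally have main: "real (card X) * x ^ k \<le> exp D" .
    have xk: "x ^ k = exp (\<delta> * real k / real a) / \<rho> ^ k" by (rule xpow)
    have "real (card X) \<le> exp D / x ^ k"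
      using main xpos by (simp add: le_divide_eq)
    also have "\<dots> = exp D * \<rho> ^ k / exp (\<delta> * real k / real a)"
      unfolding xk using assms(2) by simp
    also have "\<dots> = exp D * \<rho> ^ k * exp (- \<delta> * real k / real a)"
    proof -
      have e: "exp (- \<delta> * real k / real a) = inverse (exp (\<delta> * real k / real a))"
        by (metis exp_minus minus_divide_left mult_minus_left)
      show ?thesis unfolding e by (simp only: divide_inverse)
    qed
    finally show "real (T_inf_le a (k + 1)) \<le> exp D * \<rho> ^ k * exp (- \<delta> * real k / real a)"
      unfolding XT .
  qed
qed

end
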